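(* Let $\alpha,\beta,\gamma\in\mathbb{Z}[i]$ satisfy $\alpha^2+i\beta^2+(1+i)\gamma^2=0$, $\alpha\beta\gamma\neq0$ and $\gcd(\alpha,\beta,\gamma)\in U$. Then $\alpha\beta\gamma\not\equiv0\pmod{1+i}$.
   Context: $\mathbb{Z}[i]$ is the ring of Gaussian integers, $U=\{1,-1,i,-i\}$ its unit group; $\gcd(\alpha,\beta,\gamma)\in U$ means no common non-unit divisor. *)

theory Defs
  imports Complex_Main
begin

definition gauss_ints :: "complex set" where
  "gauss_ints = {z. Re z \<in> \<int> \<and> Im z \<in> \<int>}"

definition gdvd :: "complex \<Rightarrow> complex \<Rightarrow> bool" where
  "gdvd d a \<longleftrightarrow> (\<exists>k\<in>gauss_ints. a = d * k)"

definition gauss_units :: "complex set" where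
  "gauss_units = {1, -1, \<i>, -\<i>}"

end

theory Submission
  imports Defs
begin

lemma gi_repr:
  assumes "z \<in> gauss_ints"
  obtains x y :: int where "z = Complex (of_int x) (of_int y)"
proof -
  from assms obtain x where x: "Re z = of_int x" unfolding gauss_ints_def by (auto elim: Ints_cases)
  from assms obtain y where y: "Im z = of_int y" unfolding gauss_ints_def by (auto elim: Ints_cases)
  have "z = Complex (of_int x) (of_int y)" using x y by (simp add: complex_eq_iff)
  then show ?thesis using that by blast
qed

lemma gdvd_pi:
  assumes "z = Complex (of_int x) (of_int y)"
  shows "gdvd (1+\<i>) z \<longleftrightarrow> even (x+y)"
proof
  assume "gdvd (1+\<i>) z"
  then obtain k where k: "k \<in> gauss_ints" "z = (1+\<i>) * k" unfolding gdvd_def by blast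
  obtain u v where uv: "k = Complex (of_int u) (of_int v)" using gi_repr[OF k(1)] by blast
  have "x = u - v" "y = u + v"
    using arg_cong[OF k(2), of Re] arg_cong[OF k(2), of Im] assms uv by simp_all
  then show "even (x+y)" by simp
next
  assume "even (x+y)"
  then obtain t where t: "x + y = 2*t" by (rule dvdE)
  define k where "k = Complex (of_int t) (of_int (t - x))"
  have "k \<in> gauss_ints" unfolding k_def gauss_ints_def by simp
  moreover have "z = (1+\<i>) * k" using assms t
    by (simp add: k_def complex_eq_iff)
  ultimately show "gdvd (1+\<i>) z" unfolding gdvd_def by blast
qed

theorem lemma4p16:
  fixes \<alpha> \<beta> \<gamma> :: complex
  assumes "\<alpha> \<in> gauss_ints" and "\<beta> \<in> gauss_ints" and "\<gamma> \<in> gauss_ints"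
    and "\<alpha>^2 + \<i> * \<beta>^2 + (1 + \<i>) * \<gamma>^2 = 0"
    and "\<alpha> * \<beta> * \<gamma> \<noteq> 0"
    and "\<forall>\<delta>\<in>gauss_ints. gdvd \<delta> \<alpha> \<and> gdvd \<delta> \<beta> \<and> gdvd \<delta> \<gamma> \<longrightarrow> \<delta> \<in> gauss_units"
  shows "\<not> gdvd (1 + \<i>) (\<alpha> * \<beta> * \<gamma>)"
proof
  assume H: "gdvd (1 + \<i>) (\<alpha> * \<beta> * \<gamma>)"
  obtain a b where A: "\<alpha> = Complex (of_int a) (of_int b)" using gi_repr[OF assms(1)] by blast
  obtain c d where B: "\<beta> = Complex (of_int c) (of_int d)" using gi_repr[OF assms(2)] by blast
  obtain e f where C: "\<gamma> = Complex (of_int e) (of_int f)" using gi_repr[OF assms(3)] by blast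
  define g where "g = a*c - b*d"
  define h where "h = a*d + b*c"
  have P: "\<alpha> * \<beta> * \<gamma> = Complex (of_int (g*e - h*f)) (of_int (g*f + h*e))"
    by (simp add: A B C g_def h_def complex_eq_iff algebra_simps)
  have "even ((g*e - h*f) + (g*f + h*e))" using gdvd_pi[OF P] H by simp
  moreover have "(g*e - h*f) + (g*f + h*e) = (a+b)*(c+d)*(e+f) - 2*(b*d*(e+f) + h*f)"
    by (simp add: g_def h_def algebra_simps)
  ultimately have prod: "even ((a+b)*(c+d)*(e+f))" by simp
  have eq: "\<alpha>^2 + \<i> * \<beta>^2 + (1 + \<i>) * \<gamma>^2 = Complex
      (of_int (a^2 - b^2 - 2*c*d + e^2 - f^2 - 2*e*f))
      (of_int (2*a*b + c^2 - d^2 + e^2 - f^2 + 2*e*f))"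
    by (simp add: A B C complex_eq_iff power2_eq_square algebra_simps)
  have r: "a^2 - b^2 - 2*c*d + e^2 - f^2 - 2*e*f = 0"
    and i: "2*a*b + c^2 - d^2 + e^2 - f^2 + 2*e*f = 0"
    using assms(4) unfolding eq by (simp_all add: complex_eq_iff del: of_int_diff of_int_add)
  have r2: "even (a+b) = even (e+f)"
  proof -
    have "a^2 - b^2 - 2*c*d + e^2 - f^2 - 2*e*f = (a+b)*(a-b) + (e+f)*(e-f) - 2*(c*d + e*f)"
      by (simp add: algebra_simps power2_eq_square)
    then have "(a+b)*(a-b) + (e+f)*(e-f) = 2*(c*d + e*f)" using r by linarith
    then have "even ((a+b)*(a-b) + (e+f)*(e-f))" by simp
    moreover have "even (a+b) = even (a-b)" "even (e+f) = even (e-f)" by presburger+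
    ultimately show ?thesis by auto
  qed
  have i2: "even (c+d) = even (e+f)"
  proof -
    have "2*a*b + c^2 - d^2 + e^2 - f^2 + 2*e*f = (c+d)*(c-d) + (e+f)*(e-f) + 2*(a*b + e*f)"
      by (simp add: algebra_simps power2_eq_square)
    then have "(c+d)*(c-d) + (e+f)*(e-f) = - 2*(a*b + e*f)" using i by linarith
    then have "even ((c+d)*(c-d) + (e+f)*(e-f))" by simp
    moreover have "even (c+d) = even (c-d)" "even (e+f) = even (e-f)" by presburger+
    ultimately show ?thesis by auto
  qed
  have all: "even (a+b)" "even (c+d)" "even (e+f)" using prod r2 i2 by auto
  have "1 + \<i> \<in> gauss_ints" unfolding gauss_ints_def by simp
  moreover have "gdvd (1+\<i>) \<alpha>" "gdvd (1+\<i>) \<beta>" "gdvd (1+\<i>) \<gamma>"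
    using gdvd_pi[OF A] gdvd_pi[OF B] gdvd_pi[OF C] all by auto
  ultimately have "1 + \<i> \<in> gauss_units" using assms(6) by blast
  then show False unfolding gauss_units_def by (auto simp: complex_eq_iff)
qed

end
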